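(* Let $G$ be a cycle, $H=(T,L)$ a demand digraph, fix a partition of the population and an assignment of cost functions, and let $\sigma$ and $\hat\sigma$ be two equilibria. Let $\ell\in L$ and $i\in I_\ell$ with $\delta(i)\neq 0$. Then exactly one of the following holds: (1) there is $J\subseteq L$ with $\ell\in J$, $A_J\neq\emptyset$, and $\delta(i)\Delta_J<0$; (2) for all $J\subseteq L$ with $\ell\in J$ and $A_J\neq\emptyset$, $\Delta_J=0$.
   Context: Model: supply graph $G=(V,E)$ (here a cycle) with directed version having arc set $A$; simple demand digraph $H=(T,L)$, $T\subseteq V$, whose arcs are OD-pairs; population $I$ a bounded interval with Lebesgue measure $\lambda$, partitioned into measurable $I_\ell$, $\ell\in L$; routes are directed paths in the directed version of $G$ between the endpoints of an OD-pair; strategy profiles are measurable maps assigning to each $i\in I_\ell$ an $\ell$-route; flow $f_a=\lambda\{i:a\in\sigma(i)\}$; each user $i$ has nonnegative continuous strictly increasing costs $c_a^i$ (measurable in $i$), route cost $\sum_{a\in r}c^i_a(f_a)$; an equilibrium is a strategy profile in which every user uses a minimal-cost route for his OD-pair. Fixing an orientation of the cycle, arcs are positive or negative, each $\ell\in L$ has a unique positive route $r_\ell^+$ and unique negative route $r_\ell^-$; for a user $i\in I_\ell$ write $r_i^\pm=r_\ell^\pm$. For $J\subseteq L$, $A_J^+$ is the set of positive arcs lying in $r_\ell^+$ for exactly the $\ell\in J$ (and in no $r_\ell^+$ with $\ell\notin J$), $A_J^-$ analogously for negative arcs, $A_J=A_J^+\cup A_J^-$. For a strategy profile $\sigma$ and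 $J\subseteq L$, $f_J^{+}=\lambda\{i\in\bigcup_{\ell\in J}I_\ell:\sigma(i)=r_i^+\}$, $f_J^-=\lambda\{i\in\bigcup_{\ell\in J}I_\ell:\sigma(i)=r_i^-\}$, and hatted quantities refer to $\hat\sigma$. Define $\Delta_J=f_J^+-\hat f_J^+=\hat f_J^--f_J^-$ and $\delta(i)=\mathbf 1[\sigma(i)=r_i^+]-\mathbf 1[\hat\sigma(i)=r_i^+]$. *)

theory Defs
  imports "HOL-Analysis.Analysis"
begin

text \<open>Supply graph: the cycle on vertices 0,...,n-1 (n >= 3) with edges {k, k+1 mod n}.\<close>

definition pos_arcs :: "nat \<Rightarrow> (nat \<times> nat) set" where
  "pos_arcs n = {(k, Suc k mod n) | k. k < n}"

definition neg_arcs :: "nat \<Rightarrow> (nat \<times> nat) set" where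
  "neg_arcs n = {(Suc k mod n, k) | k. k < n}"

text \<open>Edge {k,k+1} lies on the positive s-t path iff k is in the cyclic interval s,...,t-1.\<close>
definition pos_idx :: "nat \<Rightarrow> nat \<Rightarrow> nat \<Rightarrow> nat \<Rightarrow> bool" where
  "pos_idx n s t k \<longleftrightarrow> (k + n - s) mod n < (t + n - s) mod n"

definition rplus :: "nat \<Rightarrow> nat \<times> nat \<Rightarrow> (nat \<times> nat) set" where
  "rplus n l = {(k, Suc k mod n) | k. k < n \<and> pos_idx n (fst l) (snd l) k}"

definition rminus :: "nat \<Rightarrow> nat \<times> nat \<Rightarrow> (nat \<times> nat) set" where
  "rminus n l = {(Suc k mod n, k) | k. k < n \<and> \<not> pos_idx n (fst l) (snd l) k}"

definition routes :: "nat \<Rightarrow> nat \<times> nat \<Rightarrow> (nat \<times> nat) set set" where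
  "routes n l = {rplus n l, rminus n l}"

definition flow :: "real set \<Rightarrow> (real \<Rightarrow> (nat \<times> nat) set) \<Rightarrow> nat \<times> nat \<Rightarrow> real" where
  "flow I \<sigma> a = measure lebesgue {i \<in> I. a \<in> \<sigma> i}"

definition route_cost ::
  "(real \<Rightarrow> nat \<times> nat \<Rightarrow> real \<Rightarrow> real) \<Rightarrow> real set \<Rightarrow> (real \<Rightarrow> (nat \<times> nat) set)
    \<Rightarrow> real \<Rightarrow> (nat \<times> nat) set \<Rightarrow> real" where
  "route_cost c I \<sigma> i r = (\<Sum>a\<in>r. c i a (flow I \<sigma> a))"

definition strategy_profile ::
  "nat \<Rightarrow> (nat \<times> nat) set \<Rightarrow> real set \<Rightarrow> (nat \<times> nat \<Rightarrow> real set)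
    \<Rightarrow> (real \<Rightarrow> (nat \<times> nat) set) \<Rightarrow> bool" where
  "strategy_profile n L I Ip \<sigma> \<longleftrightarrow>
     (\<forall>l\<in>L. \<forall>i\<in>Ip l. \<sigma> i \<in> routes n l) \<and>
     (\<forall>r. {i \<in> I. \<sigma> i = r} \<in> sets lebesgue)"

definition equilibrium ::
  "nat \<Rightarrow> (nat \<times> nat) set \<Rightarrow> real set \<Rightarrow> (nat \<times> nat \<Rightarrow> real set)
    \<Rightarrow> (real \<Rightarrow> nat \<times> nat \<Rightarrow> real \<Rightarrow> real) \<Rightarrow> (real \<Rightarrow> (nat \<times> nat) set) \<Rightarrow> bool" where
  "equilibrium n L I Ip c \<sigma> \<longleftrightarrow> strategy_profile n L I Ip \<sigma> \<and>
     (\<forall>l\<in>L. \<forall>i\<in>Ip l. \<forall>r\<in>routes n l. route_cost c I \<sigma> i (\<sigma> i) \<le> route_cost c I \<sigma> i r)"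

definition A_set :: "nat \<Rightarrow> (nat \<times> nat) set \<Rightarrow> (nat \<times> nat) set \<Rightarrow> (nat \<times> nat) set" where
  "A_set n L J =
     {a \<in> pos_arcs n. {l \<in> L. a \<in> rplus n l} = J} \<union> {a \<in> neg_arcs n. {l \<in> L. a \<in> rminus n l} = J}"

definition f_plus :: "nat \<Rightarrow> (nat \<times> nat \<Rightarrow> real set) \<Rightarrow> (real \<Rightarrow> (nat \<times> nat) set)
    \<Rightarrow> (nat \<times> nat) set \<Rightarrow> real" where
  "f_plus n Ip \<sigma> J = measure lebesgue (\<Union>l\<in>J. {i \<in> Ip l. \<sigma> i = rplus n l})"

definition Delta :: "nat \<Rightarrow> (nat \<times> nat \<Rightarrow> real set) \<Rightarrow> (real \<Rightarrow> (nat \<times> nat) set)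
    \<Rightarrow> (real \<Rightarrow> (nat \<times> nat) set) \<Rightarrow> (nat \<times> nat) set \<Rightarrow> real" where
  "Delta n Ip \<sigma> \<sigma>' J = f_plus n Ip \<sigma> J - f_plus n Ip \<sigma>' J"

definition delta :: "nat \<Rightarrow> (real \<Rightarrow> (nat \<times> nat) set) \<Rightarrow> (real \<Rightarrow> (nat \<times> nat) set)
    \<Rightarrow> nat \<times> nat \<Rightarrow> real \<Rightarrow> real" where
  "delta n \<sigma> \<sigma>' l i = (if \<sigma> i = rplus n l then 1 else 0) - (if \<sigma>' i = rplus n l then 1 else 0)"

end

theory Submission
  imports Defs
begin

lemma pos_neg_disj: "n \<ge> 3 \<Longrightarrow> pos_arcs n \<inter> neg_arcs n = {}"
proof (rule ccontr)
  assume n: "n \<ge> 3" and "pos_arcs n \<inter> neg_arcs n \<noteq> {}"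
  then obtain k j where kj: "k < n" "j < n" "k = Suc j mod n" "Suc k mod n = j"
    unfolding pos_arcs_def neg_arcs_def by auto
  show False
  proof (cases "Suc k < n")
    case True
    then have "j = Suc k" using kj by simp
    then have "k = Suc (Suc k) mod n" using kj by simp
    then show False using n True
      by (cases "Suc (Suc k) < n") (auto simp: mod_if split: if_splits)
  next
    case False
    then have "Suc k = n" using kj(1) by arith
    then have "j = 0" using kj(4) by simp
    then show False using kj n by (simp add: \<open>Suc k = n\<close>)
  qed
qed

lemma rplus_sub: "rplus n l \<subseteq> pos_arcs n" unfolding rplus_def pos_arcs_def by auto
lemma rminus_sub: "rminus n l \<subseteq> neg_arcs n" unfolding rminus_def neg_arcs_def by auto

lemma rplus_ne: assumes "fst l < n" "snd l < n" "fst l \<noteq> snd l" shows "rplus n l \<noteq> {}"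
proof -
  have "(snd l + n - fst l) mod n \<noteq> 0"
  proof (cases "snd l < fst l")
    case True then show ?thesis using assms by simp
  next
    case False
    then have "snd l + n - fst l = (snd l - fst l) + n" by simp
    moreover have "(snd l - fst l + n) mod n = snd l - fst l" using assms by simp
    moreover have "snd l - fst l > 0" using assms False by simp
    ultimately show ?thesis by simp
  qed
  then have "pos_idx n (fst l) (snd l) (fst l)"
    unfolding pos_idx_def by simp
  then show ?thesis using assms unfolding rplus_def by auto
qed

definition Pset where "Pset n Ip \<sigma> J = (\<Union>k\<in>J. {j \<in> Ip k. \<sigma> j = rplus n k})"
definition Mset where "Mset n Ip \<sigma> J = (\<Union>k\<in>J. {j \<in> Ip k. \<sigma> j = rminus n k})"

lemma flow_pos:
  assumes n3: "n \<ge> 3" and sp: "strategy_profile n L I Ip \<sigma>"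
    and cov: "(\<Union>k\<in>L. Ip k) = I" and a: "a \<in> pos_arcs n"
  shows "{j \<in> I. a \<in> \<sigma> j} = Pset n Ip \<sigma> {k \<in> L. a \<in> rplus n k}"
proof
  show "{j \<in> I. a \<in> \<sigma> j} \<subseteq> Pset n Ip \<sigma> {k \<in> L. a \<in> rplus n k}"
  proof
    fix j assume j: "j \<in> {j \<in> I. a \<in> \<sigma> j}"
    then obtain k where k: "k \<in> L" "j \<in> Ip k" using cov by auto
    then have "\<sigma> j \<in> {rplus n k, rminus n k}" using sp unfolding strategy_profile_def routes_def by auto
    moreover have "a \<notin> rminus n k" using rminus_sub pos_neg_disj[OF n3] a by blast
    ultimately have "\<sigma> j = rplus n k" using j by auto
    then show "j \<in> Pset n Ip \<sigma> {k \<in> L. a \<in> rplus n k}" using j k unfolding Pset_def by blast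
  qed
next
  show "Pset n Ip \<sigma> {k \<in> L. a \<in> rplus n k} \<subseteq> {j \<in> I. a \<in> \<sigma> j}"
    using cov unfolding Pset_def by auto
qed

lemma flow_neg:
  assumes n3: "n \<ge> 3" and sp: "strategy_profile n L I Ip \<sigma>"
    and cov: "(\<Union>k\<in>L. Ip k) = I" and a: "a \<in> neg_arcs n"
  shows "{j \<in> I. a \<in> \<sigma> j} = Mset n Ip \<sigma> {k \<in> L. a \<in> rminus n k}"
proof
  show "{j \<in> I. a \<in> \<sigma> j} \<subseteq> Mset n Ip \<sigma> {k \<in> L. a \<in> rminus n k}"
  proof
    fix j assume j: "j \<in> {j \<in> I. a \<in> \<sigma> j}"
    then obtain k where k: "k \<in> L" "j \<in> Ip k" using cov by auto
    then have "\<sigma> j \<in> {rplus n k, rminus n k}" using sp unfolding strategy_profile_def routes_def by auto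
    moreover have "a \<notin> rplus n k" using rplus_sub pos_neg_disj[OF n3] a by blast
    ultimately have "\<sigma> j = rminus n k" using j by auto
    then show "j \<in> Mset n Ip \<sigma> {k \<in> L. a \<in> rminus n k}" using j k unfolding Mset_def by blast
  qed
next
  show "Mset n Ip \<sigma> {k \<in> L. a \<in> rminus n k} \<subseteq> {j \<in> I. a \<in> \<sigma> j}"
    using cov unfolding Mset_def by auto
qed

lemma meas_split:
  assumes n3: "n \<ge> 3" and sp: "strategy_profile n L I Ip \<sigma>"
    and cov: "(\<Union>k\<in>L. Ip k) = I" and disj: "disjoint_family_on Ip L"
    and Ipm: "\<forall>k\<in>L. Ip k \<in> sets lebesgue" and bI: "bounded I"
    and Ls: "L \<subseteq> {(s, t). s < n \<and> t < n \<and> s \<noteq> t}" and J: "J \<subseteq> L"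
  shows "measure lebesgue (Pset n Ip \<sigma> J) + measure lebesgue (Mset n Ip \<sigma> J)
         = measure lebesgue (\<Union>k\<in>J. Ip k)"
proof -
  have finL: "finite L" by (rule finite_subset[OF Ls]) (rule finite_subset[of _ "{..<n} \<times> {..<n}"], auto)
  then have finJ: "finite J" using J by (rule finite_subset[rotated])
  have sI: "\<And>r. {j \<in> I. \<sigma> j = r} \<in> sets lebesgue" using sp unfolding strategy_profile_def by auto
  have fm: "S \<in> lmeasurable" if "S \<subseteq> I" "S \<in> sets lebesgue" for S
    using bounded_set_imp_lmeasurable bounded_subset bI that by blast
  have JI: "(\<Union>k\<in>J. Ip k) \<subseteq> I" using J cov by auto
  have mP: "Pset n Ip \<sigma> J \<in> sets lebesgue"
  proof -
    have "Pset n Ip \<sigma> J = (\<Union>k\<in>J. Ip k \<inter> {j \<in> I. \<sigma> j = rplus n k})"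
      unfolding Pset_def using JI by auto
    also have "\<dots> \<in> sets lebesgue" using finJ J Ipm sI by (intro sets.finite_UN) auto
    finally show ?thesis .
  qed
  have mM: "Mset n Ip \<sigma> J \<in> sets lebesgue"
  proof -
    have "Mset n Ip \<sigma> J = (\<Union>k\<in>J. Ip k \<inter> {j \<in> I. \<sigma> j = rminus n k})"
      unfolding Mset_def using JI by auto
    also have "\<dots> \<in> sets lebesgue" using finJ J Ipm sI by (intro sets.finite_UN) auto
    finally show ?thesis .
  qed
  have PI: "Pset n Ip \<sigma> J \<subseteq> I" and MI: "Mset n Ip \<sigma> J \<subseteq> I"
    using JI unfolding Pset_def Mset_def by auto
  have un: "Pset n Ip \<sigma> J \<union> Mset n Ip \<sigma> J = (\<Union>k\<in>J. Ip k)"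
    using sp J unfolding Pset_def Mset_def strategy_profile_def routes_def by fastforce
  have pm: "rplus n k \<noteq> rminus n k" if "k \<in> L" for k
  proof -
    have "rplus n k \<noteq> {}" using rplus_ne[of k n] Ls that by (cases k) auto
    then show ?thesis using rplus_sub[of n k] rminus_sub[of n k] pos_neg_disj[OF n3] by blast
  qed
  have int: "Pset n Ip \<sigma> J \<inter> Mset n Ip \<sigma> J = {}"
  proof (rule ccontr)
    assume "Pset n Ip \<sigma> J \<inter> Mset n Ip \<sigma> J \<noteq> {}"
    then obtain j k k' where "k \<in> J" "k' \<in> J" "j \<in> Ip k" "j \<in> Ip k'"
      "\<sigma> j = rplus n k" "\<sigma> j = rminus n k'" unfolding Pset_def Mset_def by blast
    moreover have "k = k'" using disj calculation J unfolding disjoint_family_on_def by blast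
    ultimately show False using pm J by (metis subsetD)
  qed
  show ?thesis
    using measure_Un3[OF fm[OF PI mP] fm[OF MI mM]] un int by simp
qed

lemma fplusP: "f_plus n Ip \<sigma> J = measure lebesgue (Pset n Ip \<sigma> J)"
  unfolding f_plus_def Pset_def by (rule refl)

lemma fin_pos: "finite (pos_arcs n)"
proof -
  have "pos_arcs n = (\<lambda>k. (k, Suc k mod n)) ` {..<n}" unfolding pos_arcs_def by auto
  then show ?thesis by simp
qed
lemma fin_neg: "finite (neg_arcs n)"
proof -
  have "neg_arcs n = (\<lambda>k. (Suc k mod n, k)) ` {..<n}" unfolding neg_arcs_def by auto
  then show ?thesis by simp
qed

lemma core:
  fixes c :: "real \<Rightarrow> nat \<times> nat \<Rightarrow> real \<Rightarrow> real" and \<sigma> \<sigma>' :: "real \<Rightarrow> (nat \<times> nat) set"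
  assumes n3: "n \<ge> 3"
    and Ls: "L \<subseteq> {(s, t). s < n \<and> t < n \<and> s \<noteq> t}"
    and bI: "bounded I"
    and Ipm: "\<forall>k\<in>L. Ip k \<in> sets lebesgue"
    and disj: "disjoint_family_on Ip L"
    and cov: "(\<Union>k\<in>L. Ip k) = I"
    and c_mono: "\<forall>j\<in>I. \<forall>a\<in>pos_arcs n \<union> neg_arcs n. strict_mono_on {0..} (c j a)"
    and eq1: "equilibrium n L I Ip c \<sigma>"
    and eq2: "equilibrium n L I Ip c \<sigma>'"
    and l_in: "l \<in> L" and i_in: "i \<in> Ip l"
    and s1: "\<sigma> i = rplus n l" and s2: "\<sigma>' i = rminus n l"
    and hyp: "\<forall>J\<subseteq>L. l \<in> J \<and> A_set n L J \<noteq> {} \<longrightarrow> Delta n Ip \<sigma> \<sigma>' J \<ge> 0"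
  shows "\<forall>J\<subseteq>L. l \<in> J \<and> A_set n L J \<noteq> {} \<longrightarrow> Delta n Ip \<sigma> \<sigma>' J = 0"
proof -
  define F where "F a = flow I \<sigma> a" for a
  define F' where "F' a = flow I \<sigma>' a" for a
  have sp1: "strategy_profile n L I Ip \<sigma>" and sp2: "strategy_profile n L I Ip \<sigma>'"
    using eq1 eq2 unfolding equilibrium_def by auto
  have iI: "i \<in> I" using cov l_in i_in by auto
  have Fnn: "F a \<ge> 0" "F' a \<ge> 0" for a unfolding F_def F'_def flow_def by auto
  have posD: "F a - F' a = Delta n Ip \<sigma> \<sigma>' {k \<in> L. a \<in> rplus n k}" if "a \<in> pos_arcs n" for a
  proof -
    have "F a = f_plus n Ip \<sigma> {k \<in> L. a \<in> rplus n k}"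
      unfolding F_def flow_def flow_pos[OF n3 sp1 cov that] f_plus_def Pset_def by (rule refl)
    moreover have "F' a = f_plus n Ip \<sigma>' {k \<in> L. a \<in> rplus n k}"
      unfolding F'_def flow_def flow_pos[OF n3 sp2 cov that] f_plus_def Pset_def by (rule refl)
    ultimately show ?thesis unfolding Delta_def by simp
  qed
  have negD: "F' a - F a = Delta n Ip \<sigma> \<sigma>' {k \<in> L. a \<in> rminus n k}" if "a \<in> neg_arcs n" for a
  proof -
    let ?J = "{k \<in> L. a \<in> rminus n k}"
    have "F a = measure lebesgue (Mset n Ip \<sigma> ?J)"
      unfolding F_def flow_def flow_neg[OF n3 sp1 cov that] by (rule refl)
    moreover have "F' a = measure lebesgue (Mset n Ip \<sigma>' ?J)"
      unfolding F'_def flow_def flow_neg[OF n3 sp2 cov that] by (rule refl)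
    moreover have "f_plus n Ip \<sigma> ?J + measure lebesgue (Mset n Ip \<sigma> ?J) = measure lebesgue (\<Union>k\<in>?J. Ip k)"
      unfolding fplusP by (rule meas_split[OF n3 sp1 cov disj Ipm bI Ls]) blast
    moreover have "f_plus n Ip \<sigma>' ?J + measure lebesgue (Mset n Ip \<sigma>' ?J) = measure lebesgue (\<Union>k\<in>?J. Ip k)"
      unfolding fplusP by (rule meas_split[OF n3 sp2 cov disj Ipm bI Ls]) blast
    ultimately show ?thesis unfolding Delta_def by linarith
  qed
  have mono: "strict_mono_on {0..} (c i a)" if "a \<in> pos_arcs n \<union> neg_arcs n" for a
    using c_mono iI that by blast
  define g where "g a = c i a (F a) - c i a (F' a)" for a
  define h where "h a = c i a (F' a) - c i a (F a)" for a
  have gnn: "g a \<ge> 0" if a: "a \<in> rplus n l" for a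
  proof -
    have ap: "a \<in> pos_arcs n" using a rplus_sub by blast
    have "A_set n L {k \<in> L. a \<in> rplus n k} \<noteq> {}" using ap unfolding A_set_def by blast
    then have "Delta n Ip \<sigma> \<sigma>' {k \<in> L. a \<in> rplus n k} \<ge> 0" using hyp l_in a by auto
    then have "F' a \<le> F a" using posD[OF ap] by simp
    then have "c i a (F' a) \<le> c i a (F a)"
      using strict_mono_on_leD[OF mono[of a], of "F' a" "F a"] ap Fnn[of a] by simp
    then show ?thesis unfolding g_def by simp
  qed
  have hnn: "h a \<ge> 0" if a: "a \<in> rminus n l" for a
  proof -
    have ap: "a \<in> neg_arcs n" using a rminus_sub by blast
    have "A_set n L {k \<in> L. a \<in> rminus n k} \<noteq> {}" using ap unfolding A_set_def by blast
    then have "Delta n Ip \<sigma> \<sigma>' {k \<in> L. a \<in> rminus n k} \<ge> 0" using hyp l_in a by auto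
    then have "F a \<le> F' a" using negD[OF ap] by simp
    then have "c i a (F a) \<le> c i a (F' a)"
      using strict_mono_on_leD[OF mono[of a], of "F a" "F' a"] ap Fnn[of a] by simp
    then show ?thesis unfolding h_def by simp
  qed
  have finp: "finite (rplus n l)" by (rule finite_subset[OF rplus_sub fin_pos])
  have finm: "finite (rminus n l)" by (rule finite_subset[OF rminus_sub fin_neg])
  have e1: "(\<Sum>a\<in>rplus n l. c i a (F a)) \<le> (\<Sum>a\<in>rminus n l. c i a (F a))"
  proof -
    have "route_cost c I \<sigma> i (\<sigma> i) \<le> route_cost c I \<sigma> i (rminus n l)"
      using eq1 l_in i_in unfolding equilibrium_def routes_def by blast
    then show ?thesis unfolding route_cost_def s1 F_def .
  qed
  have e2: "(\<Sum>a\<in>rminus n l. c i a (F' a)) \<le> (\<Sum>a\<in>rplus n l. c i a (F' a))"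
  proof -
    have "route_cost c I \<sigma>' i (\<sigma>' i) \<le> route_cost c I \<sigma>' i (rplus n l)"
      using eq2 l_in i_in unfolding equilibrium_def routes_def by blast
    then show ?thesis unfolding route_cost_def s2 F'_def .
  qed
  have "sum g (rplus n l) + sum h (rminus n l) \<le> 0"
    using e1 e2 unfolding g_def h_def sum_subtractf by linarith
  moreover have "sum g (rplus n l) \<ge> 0" "sum h (rminus n l) \<ge> 0"
    using gnn hnn by (auto intro: sum_nonneg)
  ultimately have "sum g (rplus n l) = 0" "sum h (rminus n l) = 0" by linarith+
  then have g0: "\<forall>a\<in>rplus n l. g a = 0" and h0: "\<forall>a\<in>rminus n l. h a = 0"
    using sum_nonneg_eq_0_iff[OF finp gnn] sum_nonneg_eq_0_iff[OF finm hnn] by auto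
  show ?thesis
  proof (intro allI impI)
    fix J assume J: "J \<subseteq> L" and lJ: "l \<in> J \<and> A_set n L J \<noteq> {}"
    then obtain a where a: "a \<in> A_set n L J" by blast
    show "Delta n Ip \<sigma> \<sigma>' J = 0"
    proof (cases "a \<in> pos_arcs n \<and> {k \<in> L. a \<in> rplus n k} = J")
      case True
      then have ar: "a \<in> rplus n l" using lJ by blast
      then have "c i a (F a) = c i a (F' a)" using g0 unfolding g_def by auto
      then have "F' a = F a" using strict_mono_on_eqD[OF mono[of a]] True Fnn[of a] by simp
      then show ?thesis using posD[of a] True by simp
    next
      case False
      then have T: "a \<in> neg_arcs n \<and> {k \<in> L. a \<in> rminus n k} = J" using a unfolding A_set_def by blast
      then have ar: "a \<in> rminus n l" using lJ by blast
      then have "c i a (F a) = c i a (F' a)" using h0 unfolding h_def by auto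
      then have "F' a = F a" using strict_mono_on_eqD[OF mono[of a]] T Fnn[of a] by simp
      then show ?thesis using negD[of a] T by simp
    qed
  qed
qed

theorem lemma1:
  fixes n :: nat and L :: "(nat \<times> nat) set" and I :: "real set"
    and Ip :: "nat \<times> nat \<Rightarrow> real set"
    and c :: "real \<Rightarrow> nat \<times> nat \<Rightarrow> real \<Rightarrow> real"
    and \<sigma> \<sigma>' :: "real \<Rightarrow> (nat \<times> nat) set"
    and l :: "nat \<times> nat" and i :: real
  assumes n3: "n \<ge> 3"
    and L_simple: "L \<subseteq> {(s, t). s < n \<and> t < n \<and> s \<noteq> t}"
    and I_interval: "is_interval I" and I_bounded: "bounded I"
    and Ip_meas: "\<forall>k\<in>L. Ip k \<in> sets lebesgue"
    and Ip_disj: "disjoint_family_on Ip L"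
    and Ip_cover: "(\<Union>k\<in>L. Ip k) = I"
    and c_nonneg: "\<forall>j\<in>I. \<forall>a\<in>pos_arcs n \<union> neg_arcs n. \<forall>x\<ge>0. c j a x \<ge> 0"
    and c_cont: "\<forall>j\<in>I. \<forall>a\<in>pos_arcs n \<union> neg_arcs n. continuous_on {0..} (c j a)"
    and c_mono: "\<forall>j\<in>I. \<forall>a\<in>pos_arcs n \<union> neg_arcs n. strict_mono_on {0..} (c j a)"
    and c_meas: "\<forall>a\<in>pos_arcs n \<union> neg_arcs n. \<forall>x.
                   (\<lambda>j. c j a x) \<in> borel_measurable (restrict_space lebesgue I)"
    and eq1: "equilibrium n L I Ip c \<sigma>"
    and eq2: "equilibrium n L I Ip c \<sigma>'"
    and l_in: "l \<in> L" and i_in: "i \<in> Ip l"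
    and delta_nz: "delta n \<sigma> \<sigma>' l i \<noteq> 0"
  shows "((\<exists>J\<subseteq>L. l \<in> J \<and> A_set n L J \<noteq> {} \<and> delta n \<sigma> \<sigma>' l i * Delta n Ip \<sigma> \<sigma>' J < 0)
          \<and> \<not> (\<forall>J\<subseteq>L. l \<in> J \<and> A_set n L J \<noteq> {} \<longrightarrow> Delta n Ip \<sigma> \<sigma>' J = 0))
       \<or> (\<not> (\<exists>J\<subseteq>L. l \<in> J \<and> A_set n L J \<noteq> {} \<and> delta n \<sigma> \<sigma>' l i * Delta n Ip \<sigma> \<sigma>' J < 0)
          \<and> (\<forall>J\<subseteq>L. l \<in> J \<and> A_set n L J \<noteq> {} \<longrightarrow> Delta n Ip \<sigma> \<sigma>' J = 0))"
proof -
  let ?P = "\<exists>J\<subseteq>L. l \<in> J \<and> A_set n L J \<noteq> {} \<and> delta n \<sigma> \<sigma>' l i * Delta n Ip \<sigma> \<sigma>' J < 0"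
  let ?Q = "\<forall>J\<subseteq>L. l \<in> J \<and> A_set n L J \<noteq> {} \<longrightarrow> Delta n Ip \<sigma> \<sigma>' J = 0"
  have PQ: "?P \<Longrightarrow> \<not> ?Q" by force
  have r1: "\<sigma> i \<in> {rplus n l, rminus n l}" and r2: "\<sigma>' i \<in> {rplus n l, rminus n l}"
  proof -
    have a1: "\<forall>k\<in>L. \<forall>j\<in>Ip k. \<sigma> j \<in> routes n k" using eq1 unfolding equilibrium_def strategy_profile_def by simp
    have a2: "\<forall>k\<in>L. \<forall>j\<in>Ip k. \<sigma>' j \<in> routes n k" using eq2 unfolding equilibrium_def strategy_profile_def by simp
    show "\<sigma> i \<in> {rplus n l, rminus n l}" using a1 l_in i_in unfolding routes_def by blast
    show "\<sigma>' i \<in> {rplus n l, rminus n l}" using a2 l_in i_in unfolding routes_def by blast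
  qed
  have Dsym: "Delta n Ip \<sigma>' \<sigma> J = - Delta n Ip \<sigma> \<sigma>' J" for J unfolding Delta_def by simp
  have NPQ: "\<not> ?P \<Longrightarrow> ?Q"
  proof -
    assume nP: "\<not> ?P"
    show ?Q
    proof (cases "\<sigma> i = rplus n l")
      case True
      then have s2: "\<sigma>' i \<noteq> rplus n l" using delta_nz unfolding delta_def by auto
      then have s2': "\<sigma>' i = rminus n l" using r2 by auto
      have d1: "delta n \<sigma> \<sigma>' l i = 1" using True s2 unfolding delta_def by simp
      have hyp: "\<forall>J\<subseteq>L. l \<in> J \<and> A_set n L J \<noteq> {} \<longrightarrow> Delta n Ip \<sigma> \<sigma>' J \<ge> 0"
      proof (intro allI impI)
        fix J assume "J \<subseteq> L" "l \<in> J \<and> A_set n L J \<noteq> {}"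
        then have "\<not> delta n \<sigma> \<sigma>' l i * Delta n Ip \<sigma> \<sigma>' J < 0" using nP by blast
        then show "Delta n Ip \<sigma> \<sigma>' J \<ge> 0" using d1 by simp
      qed
      show ?thesis
        by (rule core[OF n3 L_simple I_bounded Ip_meas Ip_disj Ip_cover c_mono eq1 eq2 l_in i_in True s2' hyp])
    next
      case False
      then have s1: "\<sigma> i = rminus n l" using r1 by auto
      have s2: "\<sigma>' i = rplus n l" using delta_nz False unfolding delta_def by (auto split: if_splits)
      have d1: "delta n \<sigma> \<sigma>' l i = -1" using False s2 unfolding delta_def by simp
      have hyp: "\<forall>J\<subseteq>L. l \<in> J \<and> A_set n L J \<noteq> {} \<longrightarrow> Delta n Ip \<sigma>' \<sigma> J \<ge> 0"
      proof (intro allI impI)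
        fix J assume "J \<subseteq> L" "l \<in> J \<and> A_set n L J \<noteq> {}"
        then have "\<not> delta n \<sigma> \<sigma>' l i * Delta n Ip \<sigma> \<sigma>' J < 0" using nP by blast
        then show "Delta n Ip \<sigma>' \<sigma> J \<ge> 0" using d1 Dsym[of J] by simp
      qed
      have "\<forall>J\<subseteq>L. l \<in> J \<and> A_set n L J \<noteq> {} \<longrightarrow> Delta n Ip \<sigma>' \<sigma> J = 0"
        by (rule core[OF n3 L_simple I_bounded Ip_meas Ip_disj Ip_cover c_mono eq2 eq1 l_in i_in s2 s1 hyp])
      then show ?thesis using Dsym by simp
    qed
  qed
  show ?thesis using PQ NPQ by blast
qed

end
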